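(* Let $\mathsf V$ be a quantale, $X=(X,a)$ a $\mathsf V$-category and $s=(x_n)_{n\in\mathbb N}$ a Cauchy sequence in $X$. Put $\widetilde s=(x_n^* )_{n\in\mathbb N}$, a sequence in $[X^{\mathrm{op}},\mathsf V]$. Then $\widetilde s$ converges to $\psi_s$ in $[X^{\mathrm{op}},\mathsf V]$. If moreover $k=\top$ is the top element of $\mathsf V$, then for every $\psi\in[X^{\mathrm{op}},\mathsf V]$, if $\widetilde s$ converges to $\psi$ then $\psi=\psi_s$.
   Context: A quantale $(\mathsf V,\otimes,k)$ is a complete anti-symmetric lattice with an associative, commutative operation $\otimes$ with neutral element $k$ distributing over arbitrary suprema; $\hom(u,-)$ is the right adjoint of $u\otimes-$. A $\mathsf V$-category $(X,a)$ is a set with $a:X\times X\to\mathsf V$ such that $k\le a(x,x)$ and $a(x,y)\otimes a(y,z)\le a(x,z)$. $[X^{\mathrm{op}},\mathsf V]$ is the $\mathsf V$-category whose elements are the maps $\psi:X\to\mathsf V$ with $a(x,x')\otimes\psi(x')\le\psi(x)$ (i.e. $\mathsf V$-modules $X\rightharpoonup E$), with structure $[\psi,\psi']=\bigwedge_{x\in X}\hom(\psi(x),\psi'(x))$. For $x\in X$, $x^*\in[X^{\mathrm{op}},\mathsf V]$ is $y\mapsto a(y,x)$. For a sequence $s=(x_n)$: $\mathrm{Cauchy}(s)=\bigvee_N\bigwedge_{n,m\ge N}a(x_n,x_m)$, $s$ is Cauchy if $k\le\mathrm{Cauchy}(s)$; $\psi_s(y)=\bigvee_N\bigwedge_{n\ge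 N}a(y,x_n)$. In a $\mathsf V$-category $(Z,c)$, for $M\subseteq Z$, $\overline M=\{z\mid k\le\bigvee_{y\in M}c(z,y)\otimes c(y,z)\}$, and a sequence $(z_n)$ converges to $z$ if $z\in\overline{\{z_n\mid n\in M\}}$ for every infinite $M\subseteq\mathbb N$. *)

theory Defs
  imports Main
begin

definition quantale :: "('v::complete_lattice \<Rightarrow> 'v \<Rightarrow> 'v) \<Rightarrow> 'v \<Rightarrow> bool" where
  "quantale t k \<longleftrightarrow>
     (\<forall>u v w. t (t u v) w = t u (t v w)) \<and>
     (\<forall>u v. t u v = t v u) \<and>
     (\<forall>u. t k u = u) \<and>
     (\<forall>u S. t u (Sup S) = (SUP v\<in>S. t u v))"

definition qhom :: "('v::complete_lattice \<Rightarrow> 'v \<Rightarrow> 'v) \<Rightarrow> 'v \<Rightarrow> 'v \<Rightarrow> 'v" where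
  "qhom t u v = Sup {w. t u w \<le> v}"

definition vcat :: "('v::complete_lattice \<Rightarrow> 'v \<Rightarrow> 'v) \<Rightarrow> 'v \<Rightarrow> 'x set \<Rightarrow> ('x \<Rightarrow> 'x \<Rightarrow> 'v) \<Rightarrow> bool" where
  "vcat t k X a \<longleftrightarrow>
     (\<forall>x\<in>X. k \<le> a x x) \<and>
     (\<forall>x\<in>X. \<forall>y\<in>X. \<forall>z\<in>X. t (a x y) (a y z) \<le> a x z)"

text \<open>Carrier of [X^op, V]; maps are taken extensional (value bot outside X).\<close>
definition presheaves :: "('v::complete_lattice \<Rightarrow> 'v \<Rightarrow> 'v) \<Rightarrow> 'x set \<Rightarrow> ('x \<Rightarrow> 'x \<Rightarrow> 'v) \<Rightarrow> ('x \<Rightarrow> 'v) set" where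
  "presheaves t X a = {\<psi>. (\<forall>x\<in>X. \<forall>x'\<in>X. t (a x x') (\<psi> x') \<le> \<psi> x) \<and> (\<forall>x. x \<notin> X \<longrightarrow> \<psi> x = bot)}"

definition psh_hom :: "('v::complete_lattice \<Rightarrow> 'v \<Rightarrow> 'v) \<Rightarrow> 'x set \<Rightarrow> ('x \<Rightarrow> 'v) \<Rightarrow> ('x \<Rightarrow> 'v) \<Rightarrow> 'v" where
  "psh_hom t X \<psi> \<psi>' = (INF x\<in>X. qhom t (\<psi> x) (\<psi>' x))"

definition yoneda :: "'x set \<Rightarrow> ('x \<Rightarrow> 'x \<Rightarrow> 'v::complete_lattice) \<Rightarrow> 'x \<Rightarrow> 'x \<Rightarrow> 'v" where
  "yoneda X a x = (\<lambda>y. if y \<in> X then a y x else bot)"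

definition cauchy_val :: "('x \<Rightarrow> 'x \<Rightarrow> 'v::complete_lattice) \<Rightarrow> (nat \<Rightarrow> 'x) \<Rightarrow> 'v" where
  "cauchy_val a s = (SUP N. INF n\<in>{N..}. INF m\<in>{N..}. a (s n) (s m))"

definition psi_seq :: "'x set \<Rightarrow> ('x \<Rightarrow> 'x \<Rightarrow> 'v::complete_lattice) \<Rightarrow> (nat \<Rightarrow> 'x) \<Rightarrow> 'x \<Rightarrow> 'v" where
  "psi_seq X a s = (\<lambda>y. if y \<in> X then (SUP N. INF n\<in>{N..}. a y (s n)) else bot)"

definition vclosure :: "('v::complete_lattice \<Rightarrow> 'v \<Rightarrow> 'v) \<Rightarrow> 'v \<Rightarrow> 'z set \<Rightarrow> ('z \<Rightarrow> 'z \<Rightarrow> 'v) \<Rightarrow> 'z set \<Rightarrow> 'z set" where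
  "vclosure t k Z c M = {z\<in>Z. k \<le> (SUP y\<in>M. t (c z y) (c y z))}"

definition vconverges :: "('v::complete_lattice \<Rightarrow> 'v \<Rightarrow> 'v) \<Rightarrow> 'v \<Rightarrow> 'z set \<Rightarrow> ('z \<Rightarrow> 'z \<Rightarrow> 'v) \<Rightarrow> (nat \<Rightarrow> 'z) \<Rightarrow> 'z \<Rightarrow> bool" where
  "vconverges t k Z c zs z \<longleftrightarrow> (\<forall>M::nat set. infinite M \<longrightarrow> z \<in> vclosure t k Z c (zs ` M))"

end

theory Submission
  imports Defs "HOL-Library.Infinite_Set"
begin

lemma q_comm: "quantale t k \<Longrightarrow> t u v = t v u" by (simp add: quantale_def)
lemma q_unit: "quantale t k \<Longrightarrow> t k u = u" by (simp add: quantale_def)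
lemma q_sup: "quantale t k \<Longrightarrow> t u (Sup S) = (SUP v\<in>S. t u v)" by (simp add: quantale_def)

lemma q_SUP: "quantale t k \<Longrightarrow> t u (SUP i\<in>I. f i) = (SUP i\<in>I. t u (f i))"
  using q_sup[of t k u "f ` I"] by (simp add: image_comp)

lemma q_mono2: assumes "quantale t k" "v \<le> w" shows "t u v \<le> t u w"
proof -
  have "t u (Sup {v,w}) = sup (t u v) (t u w)" using q_sup[OF assms(1), of u "{v,w}"] by simp
  moreover have "Sup {v,w} = w" using assms(2) by (simp add: sup_absorb2)
  ultimately show ?thesis by (metis sup_ge1)
qed

lemma q_mono: assumes "quantale t k" "u \<le> u'" "v \<le> v'" shows "t u v \<le> t u' v'"
  by (metis assms q_comm q_mono2 order_trans)

lemma q_eval: assumes "quantale t k" shows "t u (qhom t u v) \<le> v"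
  unfolding qhom_def using q_sup[OF assms, of u "{w. t u w \<le> v}"] by (simp add: SUP_le_iff)

lemma q_adj: "t u w \<le> v \<Longrightarrow> w \<le> qhom t u v"
  unfolding qhom_def by (simp add: Sup_upper)

lemma psh_le: assumes "quantale t k" "\<And>x. x \<in> X \<Longrightarrow> t (\<phi> x) w \<le> \<chi> x"
  shows "w \<le> psh_hom t X \<phi> \<chi>"
  unfolding psh_hom_def using assms by (auto intro!: INF_greatest q_adj)

lemma psh_eval: assumes "quantale t k" "x \<in> X"
  shows "t (\<phi> x) (psh_hom t X \<phi> \<chi>) \<le> \<chi> x"
proof -
  have "psh_hom t X \<phi> \<chi> \<le> qhom t (\<phi> x) (\<chi> x)" unfolding psh_hom_def using assms(2) by (rule INF_lower)
  then show ?thesis by (meson assms(1) q_eval q_mono2 order_trans)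
qed

lemma q_assoc: "quantale t k \<Longrightarrow> t (t u v) w = t u (t v w)" unfolding quantale_def by blast

lemma psh_trans: assumes "quantale t k"
  shows "t (psh_hom t X \<phi> \<chi>) (psh_hom t X \<chi> \<omega>) \<le> psh_hom t X \<phi> \<omega>"
proof (rule psh_le[OF assms])
  fix x assume x: "x \<in> X"
  have "t (\<phi> x) (t (psh_hom t X \<phi> \<chi>) (psh_hom t X \<chi> \<omega>)) = t (t (\<phi> x) (psh_hom t X \<phi> \<chi>)) (psh_hom t X \<chi> \<omega>)"
    using q_assoc[OF assms] by simp
  also have "\<dots> \<le> t (\<chi> x) (psh_hom t X \<chi> \<omega>)" using q_mono[OF assms psh_eval[OF assms x] order_refl] .
  also have "\<dots> \<le> \<omega> x" using psh_eval[OF assms x] .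
  finally show "t (\<phi> x) (t (psh_hom t X \<phi> \<chi>) (psh_hom t X \<chi> \<omega>)) \<le> \<omega> x" .
qed

lemma q_top_le: assumes "quantale t k" "k = top" shows "t u v \<le> u"
  by (metis assms q_comm q_mono2 q_unit top_greatest)


theorem proposition3p17:
  fixes t :: "'v::complete_lattice \<Rightarrow> 'v \<Rightarrow> 'v" and k :: 'v
    and X :: "'x set" and a :: "'x \<Rightarrow> 'x \<Rightarrow> 'v" and s :: "nat \<Rightarrow> 'x"
  assumes "quantale t k"
    and "vcat t k X a"
    and "\<forall>n. s n \<in> X"
    and "k \<le> cauchy_val a s"
  shows "vconverges t k (presheaves t X a) (psh_hom t X) (\<lambda>n. yoneda X a (s n)) (psi_seq X a s)
       \<and> (k = top \<longrightarrow> (\<forall>\<psi>\<in>presheaves t X a.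
            vconverges t k (presheaves t X a) (psh_hom t X) (\<lambda>n. yoneda X a (s n)) \<psi>
              \<longrightarrow> \<psi> = psi_seq X a s))"
proof -
  note q = assms(1)
  have tr: "\<And>x y z. x \<in> X \<Longrightarrow> y \<in> X \<Longrightarrow> z \<in> X \<Longrightarrow> t (a x y) (a y z) \<le> a x z"
    using assms(2) unfolding vcat_def by blast
  have sX: "\<And>n. s n \<in> X" using assms(3) by blast
  define c where "c N = (INF n\<in>{N..}. INF m\<in>{N..}. a (s n) (s m))" for N
  define ps where "ps = psi_seq X a s"
  define y where "y n = yoneda X a (s n)" for n
  define h where "h = psh_hom t X"
  have c_mono: "c N \<le> c N'" if "N \<le> N'" for N N'
    unfolding c_def using that by (intro INF_superset_mono) (auto intro!: INF_superset_mono)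
  have c_le: "c N \<le> a (s n) (s m)" if "N \<le> n" "N \<le> m" for N n m
    unfolding c_def using that by (meson INF_lower atLeast_iff order_trans)
  have kc: "k \<le> (SUP N. c N)" using assms(4) unfolding cauchy_val_def c_def .
  have ps_x: "x \<in> X \<Longrightarrow> ps x = (SUP K. INF m\<in>{K..}. a x (s m))" for x
    unfolding ps_def psi_seq_def by simp
  have ps_in: "ps \<in> presheaves t X a"
    unfolding presheaves_def
  proof (intro CollectI conjI ballI allI impI)
    fix x x' assume x: "x \<in> X" and x': "x' \<in> X"
    have "t (a x x') (ps x') = (SUP K. t (a x x') (INF m\<in>{K..}. a x' (s m)))"
      using ps_x[OF x'] q_SUP[OF q] by simp
    also have "\<dots> \<le> (SUP K. INF m\<in>{K..}. a x (s m))"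
    proof (rule SUP_mono, intro bexI)
      fix K show "t (a x x') (INF m\<in>{K..}. a x' (s m)) \<le> (INF m\<in>{K..}. a x (s m))"
      proof (rule INF_greatest)
        fix m assume "m \<in> {K..}"
        then have "t (a x x') (INF m\<in>{K..}. a x' (s m)) \<le> t (a x x') (a x' (s m))"
          by (intro q_mono2[OF q] INF_lower)
        also have "\<dots> \<le> a x (s m)" using tr x x' sX by blast
        finally show "t (a x x') (INF m\<in>{K..}. a x' (s m)) \<le> a x (s m)" .
      qed
    qed simp
    finally show "t (a x x') (ps x') \<le> ps x" using ps_x[OF x] by simp
  next
    fix x assume "x \<notin> X" then show "ps x = bot" unfolding ps_def psi_seq_def by simp
  qed
  have y_x: "x \<in> X \<Longrightarrow> y n x = a x (s n)" for x n unfolding y_def yoneda_def by simp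
  have A: "c N \<le> h (y n) ps" if "N \<le> n" for N n
    unfolding h_def
  proof (rule psh_le[OF q])
    fix x assume x: "x \<in> X"
    have "t (a x (s n)) (c N) \<le> (INF m\<in>{N..}. a x (s m))"
    proof (rule INF_greatest)
      fix m assume "m \<in> {N..}"
      then have "t (a x (s n)) (c N) \<le> t (a x (s n)) (a (s n) (s m))"
        using that by (intro q_mono2[OF q] c_le) auto
      also have "\<dots> \<le> a x (s m)" using tr x sX by blast
      finally show "t (a x (s n)) (c N) \<le> a x (s m)" .
    qed
    also have "\<dots> \<le> ps x" using ps_x[OF x] by (auto intro: SUP_upper)
    finally show "t (y n x) (c N) \<le> ps x" using y_x[OF x] by simp
  qed
  have B: "c N \<le> h ps (y n)" if "N \<le> n" for N n
    unfolding h_def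
  proof (rule psh_le[OF q])
    fix x assume x: "x \<in> X"
    have "t (ps x) (c N) = t (c N) (ps x)" using q_comm[OF q] by simp
    also have "\<dots> = (SUP K. t (c N) (INF m\<in>{K..}. a x (s m)))"
      using ps_x[OF x] q_SUP[OF q] by simp
    also have "\<dots> \<le> a x (s n)"
    proof (rule SUP_least)
      fix K
      let ?m = "max K N"
      have "t (c N) (INF m\<in>{K..}. a x (s m)) \<le> t (a (s ?m) (s n)) (a x (s ?m))"
        using that by (intro q_mono[OF q] c_le INF_lower) auto
      also have "\<dots> = t (a x (s ?m)) (a (s ?m) (s n))" using q_comm[OF q] by simp
      also have "\<dots> \<le> a x (s n)" using tr x sX by blast
      finally show "t (c N) (INF m\<in>{K..}. a x (s m)) \<le> a x (s n)" .
    qed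
    finally show "t (ps x) (c N) \<le> y n x" using y_x[OF x] by simp
  qed
  have part1: "vconverges t k (presheaves t X a) h y ps"
    unfolding vconverges_def vclosure_def
  proof (intro allI impI CollectI conjI ps_in)
    fix M :: "nat set" assume M: "infinite M"
    let ?R = "(SUP z\<in>y ` M. t (h ps z) (h z ps))"
    have "k = t k k" using q_unit[OF q] by simp
    also have "\<dots> \<le> t (SUP N. c N) (SUP N. c N)" using q_mono[OF q kc kc] .
    also have "\<dots> = (SUP N. t (SUP N. c N) (c N))" by (rule q_SUP[OF q])
    also have "\<dots> = (SUP N. t (c N) (SUP N. c N))" by (rule SUP_cong, simp, rule q_comm[OF q])
    also have "\<dots> = (SUP N. SUP N'. t (c N) (c N'))" by (rule SUP_cong, simp, rule q_SUP[OF q])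
    also have "\<dots> \<le> ?R"
    proof (intro SUP_least)
      fix N N'
      obtain n where n: "n \<in> M" "max N N' \<le> n"
        using M unfolding infinite_nat_iff_unbounded_le by blast
      have "t (c N) (c N') \<le> t (h ps (y n)) (h (y n) ps)"
        using n by (intro q_mono[OF q] order_trans[OF c_mono A] order_trans[OF c_mono B]) auto
      also have "\<dots> \<le> ?R" using n by (auto intro: SUP_upper)
      finally show "t (c N) (c N') \<le> ?R" .
    qed
    finally show "k \<le> ?R" .
  qed
  have part2: "\<psi> = ps" if kt: "k = top" and psi: "\<psi> \<in> presheaves t X a"
    and conv: "vconverges t k (presheaves t X a) h y \<psi>" for \<psi>
  proof -
    have S1: "(SUP n\<in>{N..}. h \<psi> (y n)) = top" and S2: "(SUP n\<in>{N..}. h (y n) \<psi>) = top" for N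
    proof -
      have "infinite {N..}" by (simp add: infinite_Ici)
      then have "top \<le> (SUP z\<in>y ` {N..}. t (h \<psi> z) (h z \<psi>))"
        using conv kt unfolding vconverges_def vclosure_def by blast
      also have "\<dots> = (SUP n\<in>{N..}. t (h \<psi> (y n)) (h (y n) \<psi>))" by (simp add: image_comp)
      finally have T: "top \<le> (SUP n\<in>{N..}. t (h \<psi> (y n)) (h (y n) \<psi>))" .
      have "(SUP n\<in>{N..}. t (h \<psi> (y n)) (h (y n) \<psi>)) \<le> (SUP n\<in>{N..}. h \<psi> (y n))"
        by (rule SUP_mono) (use q_top_le[OF q kt] in blast)
      then show "(SUP n\<in>{N..}. h \<psi> (y n)) = top" using T by (simp add: top_le)
      have "(SUP n\<in>{N..}. t (h \<psi> (y n)) (h (y n) \<psi>)) \<le> (SUP n\<in>{N..}. h (y n) \<psi>)"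
        by (rule SUP_mono) (metis q_top_le[OF q kt] q_comm[OF q] order_refl atLeast_iff)
      then show "(SUP n\<in>{N..}. h (y n) \<psi>) = top" using T by (simp add: top_le)
    qed
    have unitt: "t top u = u" "t u top = u" for u
      using q_unit[OF q, of u] q_comm[OF q, of u top] kt by simp_all
    have H1: "top \<le> h \<psi> ps"
    proof -
      have "c N \<le> h \<psi> ps" for N
      proof -
        have "c N = t (SUP n\<in>{N..}. h \<psi> (y n)) (c N)" using S1 unitt by simp
        also have "\<dots> = t (c N) (SUP n\<in>{N..}. h \<psi> (y n))" by (rule q_comm[OF q])
        also have "\<dots> = (SUP n\<in>{N..}. t (c N) (h \<psi> (y n)))" by (rule q_SUP[OF q])
        also have "\<dots> = (SUP n\<in>{N..}. t (h \<psi> (y n)) (c N))" by (rule SUP_cong, simp, rule q_comm[OF q])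
        also have "\<dots> \<le> h \<psi> ps"
        proof (rule SUP_least)
          fix n assume "n \<in> {N..}"
          then have "t (h \<psi> (y n)) (c N) \<le> t (h \<psi> (y n)) (h (y n) ps)"
            by (intro q_mono2[OF q] A) auto
          also have "\<dots> \<le> h \<psi> ps" unfolding h_def by (rule psh_trans[OF q])
          finally show "t (h \<psi> (y n)) (c N) \<le> h \<psi> ps" .
        qed
        finally show ?thesis .
      qed
      then show ?thesis using kc kt by (metis SUP_least order_trans)
    qed
    have H2: "top \<le> h ps \<psi>"
    proof -
      have "c N \<le> h ps \<psi>" for N
      proof -
        have "c N = t (c N) (SUP n\<in>{N..}. h (y n) \<psi>)" using S2 unitt by simp
        also have "\<dots> = (SUP n\<in>{N..}. t (c N) (h (y n) \<psi>))"
          by (rule q_SUP[OF q])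
        also have "\<dots> \<le> h ps \<psi>"
        proof (rule SUP_least)
          fix n assume "n \<in> {N..}"
          then have "t (c N) (h (y n) \<psi>) \<le> t (h ps (y n)) (h (y n) \<psi>)"
            by (intro q_mono[OF q] B) auto
          also have "\<dots> \<le> h ps \<psi>" unfolding h_def by (rule psh_trans[OF q])
          finally show "t (c N) (h (y n) \<psi>) \<le> h ps \<psi>" .
        qed
        finally show ?thesis .
      qed
      then show ?thesis using kc kt by (metis SUP_least order_trans)
    qed
    show ?thesis
    proof
      fix x
      show "\<psi> x = ps x"
      proof (cases "x \<in> X")
        case True
        have "\<psi> x = t (\<psi> x) top" using unitt by simp
        also have "\<dots> \<le> ps x" using psh_eval[OF q True, of \<psi> ps] H1 unfolding h_def
          by (metis top_le)
        finally have 1: "\<psi> x \<le> ps x" .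
        have "ps x = t (ps x) top" using unitt by simp
        also have "\<dots> \<le> \<psi> x" using psh_eval[OF q True, of ps \<psi>] H2 unfolding h_def
          by (metis top_le)
        finally show ?thesis using 1 by simp
      next
        case False
        then show ?thesis using psi unfolding presheaves_def ps_def psi_seq_def by simp
      qed
    qed
  qed
  show ?thesis using part1 part2 unfolding h_def y_def ps_def by blast
qed

end
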